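(* Let $0<\alpha<1$, $\bar\alpha=1-\alpha$, $c=(1+\bar\alpha\alpha^{\alpha/\bar\alpha})^{-1}$. Define functions $P_0,P_1$ on $\{0,1\}^n$ for all $n\ge0$ recursively by $P_0(\emptyset)=P_1(\emptyset)=1$ and, for $u\in\{0,1\}^{n-1}$, $P_0(0,u)=c\big(P_0(u)-\alpha^{1/\bar\alpha}P_1(u)\big)$, $P_0(1,u)=c\,\alpha^{\alpha/\bar\alpha}P_1(u)$, $P_1(0,u)=c\,\alpha^{\alpha/\bar\alpha}P_0(u)$, $P_1(1,u)=c\big(P_1(u)-\alpha^{1/\bar\alpha}P_0(u)\big)$. Then there exists $\beta$ with $1\le\beta\le\alpha^{-1/\bar\alpha}$ such that for every $n\ge1$: if $\beta P_1(u)\ge P_0(u)$ and $\beta P_0(u)\ge P_1(u)$ for all $u\in\{0,1\}^{n-1}$, then $\beta P_1(x)\ge P_0(x)$ and $\beta P_0(x)\ge P_1(x)$ for all $x\in\{0,1\}^n$.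
   Context: $(0,u)$ denotes the sequence with first coordinate $0$ followed by $u$. *)

theory Defs
  imports Complex_Main
begin

text \<open>Binary words in {0,1}^n are bool lists of length n (False = 0, True = 1);
  the first coordinate is the head of the list.
  P a False u = P_0(u), P a True u = P_1(u), for parameter alpha = a.\<close>

definition cst :: "real \<Rightarrow> real" where
  "cst a = 1 / (1 + (1 - a) * a powr (a / (1 - a)))"

fun P :: "real \<Rightarrow> bool \<Rightarrow> bool list \<Rightarrow> real" where
  "P a b [] = 1"
| "P a False (False # u) = cst a * (P a False u - a powr (1 / (1 - a)) * P a True u)"
| "P a False (True # u) = cst a * a powr (a / (1 - a)) * P a True u"
| "P a True (False # u) = cst a * a powr (a / (1 - a)) * P a False u"
| "P a True (True # u) = cst a * (P a True u - a powr (1 / (1 - a)) * P a False u)"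

end

theory Submission
  imports Defs
begin

lemma ln_le_aux:
  fixes a :: real assumes "0 < a" "a \<le> 1"
  shows "ln a \<le> 2 * (a - 1) / (a + 1)"
proof -
  let ?f = "\<lambda>x::real. ln x - 2 * (x - 1) / (x + 1)"
  have "?f a \<le> ?f 1"
  proof (rule DERIV_nonneg_imp_nondecreasing[OF assms(2)])
    fix x :: real assume x: "a \<le> x" "x \<le> 1"
    hence xp: "x > 0" using assms by simp
    have "DERIV ?f x :> (1 / x - 2 * ((x + 1) - (x - 1)) / (x + 1)^2)"
      using xp by (auto intro!: derivative_eq_intros simp: power2_eq_square field_simps)
    moreover have "1 / x - 2 * ((x + 1) - (x - 1)) / (x + 1)^2 = (x - 1)^2 / (x * (x + 1)^2)"
      proof -
      have "x + 1 > 0" using xp by simp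
      hence "1 / x - 2 * ((x + 1) - (x - 1)) / (x + 1)^2 = ((x + 1)^2 - 4 * x) / (x * (x + 1)^2)"
        using xp by (simp add: field_simps)
      also have "(x + 1)^2 - 4 * x = (x - 1)^2" by (simp add: power2_eq_square algebra_simps)
      finally show ?thesis .
    qed
    moreover have "(x - 1)^2 / (x * (x + 1)^2) \<ge> 0" using xp by simp
    ultimately show "\<exists>y. DERIV ?f x :> y \<and> y \<ge> 0" by auto
  qed
  thus ?thesis by simp
qed

lemma key:
  fixes a A B c b p0 p1 :: real
  assumes c: "c > 0" and A: "A > 0" and B: "B > 0" and b1: "b > 1"
    and F1: "A * b^2 - b + B \<ge> 0" and F2: "B * b^2 - b + A \<le> 0"
    and h1: "b * p1 \<ge> p0" and h2: "b * p0 \<ge> p1"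
  shows "b * (c * A * p0) \<ge> c * (p0 - B * p1) \<and> b * (c * (p0 - B * p1)) \<ge> c * A * p0
       \<and> b * (c * (p1 - B * p0)) \<ge> c * A * p1 \<and> b * (c * A * p1) \<ge> c * (p1 - B * p0)"
proof -
  have bb: "b * b - 1 > 0" using b1 mult_strict_mono[of 1 b 1 b] by simp
  have "b * (b * p1) \<ge> b * p0" using h1 b1 by (simp add: mult_left_mono)
  hence "(b * b - 1) * p1 \<ge> 0" using h2 by (simp add: algebra_simps)
  hence p1: "p1 \<ge> 0" using bb by (simp add: zero_le_mult_iff)
  have "b * (b * p0) \<ge> b * p1" using h2 b1 by (simp add: mult_left_mono)
  hence "(b * b - 1) * p0 \<ge> 0" using h1 by (simp add: algebra_simps)
  hence p0: "p0 \<ge> 0" using bb by (simp add: zero_le_mult_iff)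
  have G1: "(b * A - 1) * p0 + B * p1 \<ge> 0"
  proof -
    have "b * ((b * A - 1) * p0 + B * p1) = (b * A - 1) * b * p0 + B * (b * p1)" by (simp add: algebra_simps)
    also have "\<dots> \<ge> (b * A - 1) * b * p0 + B * p0" using B h1 by (simp add: mult_left_mono)
    also have "(b * A - 1) * b * p0 + B * p0 = (A * b^2 - b + B) * p0" by (simp add: algebra_simps power2_eq_square)
    finally have "b * ((b * A - 1) * p0 + B * p1) \<ge> 0" using mult_nonneg_nonneg[OF F1 p0] by linarith
    thus ?thesis using b1 by (simp add: zero_le_mult_iff)
  qed
  have G1': "(b * A - 1) * p1 + B * p0 \<ge> 0"
  proof -
    have "b * ((b * A - 1) * p1 + B * p0) = (b * A - 1) * b * p1 + B * (b * p0)" by (simp add: algebra_simps)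
    also have "\<dots> \<ge> (b * A - 1) * b * p1 + B * p1" using B h2 by (simp add: mult_left_mono)
    also have "(b * A - 1) * b * p1 + B * p1 = (A * b^2 - b + B) * p1" by (simp add: algebra_simps power2_eq_square)
    finally have "b * ((b * A - 1) * p1 + B * p0) \<ge> 0" using mult_nonneg_nonneg[OF F1 p1] by linarith
    thus ?thesis using b1 by (simp add: zero_le_mult_iff)
  qed
  have G2: "(b - A) * p0 - b * B * p1 \<ge> 0"
  proof -
    have "b * B * p1 \<le> b * B * (b * p0)" using h2 B b1 by (simp add: mult_left_mono)
    hence "(b - A) * p0 - b * B * p1 \<ge> (b - A) * p0 - b * B * (b * p0)" by simp
    also have "(b - A) * p0 - b * B * (b * p0) = -(B * b^2 - b + A) * p0" by (simp add: algebra_simps power2_eq_square)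
    finally show ?thesis using mult_nonneg_nonneg[of "-(B * b^2 - b + A)" p0] F2 p0 by linarith
  qed
  have G2': "(b - A) * p1 - b * B * p0 \<ge> 0"
  proof -
    have "b * B * p0 \<le> b * B * (b * p1)" using h1 B b1 by (simp add: mult_left_mono)
    hence "(b - A) * p1 - b * B * p0 \<ge> (b - A) * p1 - b * B * (b * p1)" by simp
    also have "(b - A) * p1 - b * B * (b * p1) = -(B * b^2 - b + A) * p1" by (simp add: algebra_simps power2_eq_square)
    finally show ?thesis using mult_nonneg_nonneg[of "-(B * b^2 - b + A)" p1] F2 p1 by linarith
  qed
  have m: "\<And>g. g \<ge> 0 \<Longrightarrow> c * g \<ge> 0" using c by simp
  show ?thesis
    using m[OF G1] m[OF G2] m[OF G1'] m[OF G2'] by (auto simp: algebra_simps)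
qed

theorem lemma4:
  fixes \<alpha> :: real
  assumes "0 < \<alpha>" and "\<alpha> < 1"
  shows "\<exists>\<beta>::real. 1 \<le> \<beta> \<and> \<beta> \<le> \<alpha> powr (- 1 / (1 - \<alpha>)) \<and>
    (\<forall>n::nat. n \<ge> 1 \<longrightarrow>
      (\<forall>u. length u = n - 1 \<longrightarrow> \<beta> * P \<alpha> True u \<ge> P \<alpha> False u \<and> \<beta> * P \<alpha> False u \<ge> P \<alpha> True u)
      \<longrightarrow> (\<forall>x. length x = n \<longrightarrow> \<beta> * P \<alpha> True x \<ge> P \<alpha> False x \<and> \<beta> * P \<alpha> False x \<ge> P \<alpha> True x))"
proof -
  have a0: "0 < \<alpha>" and a1: "\<alpha> < 1" using assms by auto
  define A where "A = \<alpha> powr (\<alpha> / (1 - \<alpha>))"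
  define B where "B = \<alpha> powr (1 / (1 - \<alpha>))"
  define Q where "Q = \<alpha> * A^2"
  have A0: "A > 0" unfolding A_def using a0 by simp
  have "1 / (1 - \<alpha>) = 1 + \<alpha> / (1 - \<alpha>)" using a1 by (simp add: field_simps)
  hence BA: "B = \<alpha> * A" unfolding B_def A_def using a0 by (simp add: powr_add)
  have B0: "B > 0" using BA a0 A0 by simp
  have Binv: "\<alpha> powr (- 1 / (1 - \<alpha>)) = 1 / B"
    unfolding B_def using a0 by (simp add: powr_minus divide_inverse minus_divide_left[symmetric])
  have e1: "exp (1::real) \<ge> 2" using exp_ge_add_one_self[of 1] by simp
  have Bhalf: "B < 1/2"
  proof -
    have "ln \<alpha> \<le> \<alpha> - 1" using ln_le_minus_one a0 by simp
    hence "ln \<alpha> / (1 - \<alpha>) \<le> -1" using a1 by (simp add: divide_simps)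
    hence "B \<le> exp (-1)" unfolding B_def using a0 by (simp add: powr_def)
    also have "exp (-1) < exp (- ln (2::real))" using ln_2_less_1 by simp
    also have "exp (- ln (2::real)) = 1/2" by (simp add: exp_minus)
    finally show ?thesis .
  qed
  have Q4: "Q \<le> 1/4"
  proof -
    have "1 + \<alpha> / (1 - \<alpha>) + \<alpha> / (1 - \<alpha>) = (1 + \<alpha>) / (1 - \<alpha>)" using a1 by (simp add: field_simps)
    have "Q = \<alpha> powr ((1 + \<alpha>) / (1 - \<alpha>))"
      proof -
        have "\<alpha> powr ((1 + \<alpha>) / (1 - \<alpha>)) = \<alpha> powr 1 * \<alpha> powr (\<alpha> / (1 - \<alpha>)) * \<alpha> powr (\<alpha> / (1 - \<alpha>))"
          by (simp only: powr_add[symmetric] \<open>1 + \<alpha> / (1 - \<alpha>) + \<alpha> / (1 - \<alpha>) = (1 + \<alpha>) / (1 - \<alpha>)\<close>)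
        thus ?thesis unfolding Q_def A_def using a0 by (simp add: power2_eq_square)
      qed
    also have "\<dots> = exp ((1 + \<alpha>) / (1 - \<alpha>) * ln \<alpha>)" using a0 by (simp add: powr_def)
    also have "\<dots> \<le> exp (-2::real)"
    proof -
      have "ln \<alpha> \<le> 2 * (\<alpha> - 1) / (\<alpha> + 1)" using ln_le_aux a0 a1 by simp
      hence "(1 + \<alpha>) / (1 - \<alpha>) * ln \<alpha> \<le> (1 + \<alpha>) / (1 - \<alpha>) * (2 * (\<alpha> - 1) / (\<alpha> + 1))"
        using a0 a1 by (intro mult_left_mono) auto
      also have "\<dots> = -2"
      proof -
        have n1: "1 - \<alpha> \<noteq> 0" "\<alpha> + 1 \<noteq> 0" "1 + \<alpha> \<noteq> 0" using a0 a1 by auto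
        have "(1 + \<alpha>) / (1 - \<alpha>) * (2 * (\<alpha> - 1) / (\<alpha> + 1)) = (2 * (\<alpha> - 1)) / (1 - \<alpha>)"
          using n1 by (simp add: add.commute)
        also have "\<dots> = -2" using n1 by (simp add: field_simps)
        finally show ?thesis .
      qed
      finally show ?thesis by simp
    qed
    also have "exp (-2::real) = 1 / (exp 1 * exp 1)"
    proof -
      have "exp (2::real) = exp (1 + 1)" by simp
      also have "\<dots> = exp 1 * exp 1" by (rule exp_add)
      finally show ?thesis by (simp add: exp_minus divide_inverse)
    qed
    also have "\<dots> \<le> 1/4" using e1 mult_mono[OF e1 e1] by (simp add: divide_simps)
    finally show ?thesis .
  qed
  have Q0: "Q \<ge> 0" unfolding Q_def using a0 by simp
  define D where "D = sqrt (1 - 4 * Q)"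
  have D0: "D \<ge> 0" and D1: "D \<le> 1" and D2: "D^2 = 1 - 4 * Q"
    unfolding D_def using Q4 Q0 by auto
  define k where "k = (1 + D) / 2"
  have k2: "k^2 = k - Q" unfolding k_def using D2 by (simp add: power2_eq_square field_simps)
  have kh: "k \<ge> 1/2" and k1: "k \<le> 1" unfolding k_def using D0 D1 by auto
  define \<beta> where "\<beta> = k / B"
  have b1: "\<beta> > 1" unfolding \<beta>_def using B0 Bhalf kh by simp
  have bB: "\<beta> \<le> 1 / B" unfolding \<beta>_def using B0 k1 by (simp add: divide_right_mono)
  have QA: "Q = B * A" unfolding Q_def BA by (simp add: power2_eq_square)
  have F2: "B * \<beta>^2 - \<beta> + A \<le> 0"
  proof -
    have "B * (B * \<beta>^2 - \<beta> + A) = k^2 - k + Q" unfolding \<beta>_def QA using B0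
      by (simp add: power2_eq_square field_simps)
    also have "\<dots> = 0" using k2 by simp
    finally show ?thesis using B0 by simp
  qed
  have F1: "A * \<beta>^2 - \<beta> + B \<ge> 0"
  proof -
    have "(\<alpha>^2 * A) * (A * \<beta>^2 - \<beta> + B) = k^2 - \<alpha> * k + \<alpha>^3 * A^2"
      unfolding \<beta>_def BA using a0 A0 by (simp add: power2_eq_square power3_eq_cube field_simps)
    also have "\<dots> = (1 - \<alpha>) * (k - Q * (1 + \<alpha>))" unfolding k2 Q_def
      by (simp add: power2_eq_square power3_eq_cube algebra_simps)
    also have "\<dots> \<ge> 0"
    proof -
      have "Q * (1 + \<alpha>) \<le> 1/4 * 2" using Q4 Q0 a0 a1 by (intro mult_mono) auto
      thus ?thesis using kh a1 by simp
    qed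
    finally have "(\<alpha>^2 * A) * (A * \<beta>^2 - \<beta> + B) \<ge> 0" .
    moreover have "\<alpha>^2 * A > 0" using a0 A0 by simp
    ultimately show ?thesis by (simp add: zero_le_mult_iff)
  qed
  have c0: "cst \<alpha> > 0"
  proof -
    have "(1 - \<alpha>) * A > 0" using A0 a1 by simp
    thus ?thesis unfolding cst_def A_def[symmetric] by simp
  qed
  show ?thesis
  proof (intro exI[of _ \<beta>] conjI allI impI)
    show "1 \<le> \<beta>" using b1 by simp
    show "\<beta> \<le> \<alpha> powr (- 1 / (1 - \<alpha>))" using bB Binv by simp
  next
    fix n :: nat and x :: "bool list"
    assume n1: "n \<ge> 1"
      and H: "\<forall>u. length u = n - 1 \<longrightarrow> \<beta> * P \<alpha> True u \<ge> P \<alpha> False u \<and> \<beta> * P \<alpha> False u \<ge> P \<alpha> True u"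
      and lx: "length x = n"
    obtain b u where xu: "x = b # u" using lx n1 by (cases x) auto
    have "length u = n - 1" using xu lx by simp
    with H have h: "\<beta> * P \<alpha> True u \<ge> P \<alpha> False u" "\<beta> * P \<alpha> False u \<ge> P \<alpha> True u" by auto
    note K = key[OF c0 A0 B0 b1 F1 F2 h, unfolded A_def B_def]
    show "\<beta> * P \<alpha> True x \<ge> P \<alpha> False x"
      using K unfolding xu by (cases b) auto
    show "\<beta> * P \<alpha> False x \<ge> P \<alpha> True x"
      using K unfolding xu by (cases b) auto
  qed
qed

end
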